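(* Fix $x_0$, observations $(y_1,\dots,y_T)$, $\tau\in(0,1)$, $v\in B(0,\rho_{\max})$ and a nominal control $u\in U$ left continuous at $\tau$; let $x$ be the nominal trajectory and $x^\epsilon$ (with modes $x_i^\epsilon$) the trajectory under the perturbed control $u^\epsilon$, $\epsilon\in[0,\tau]$. Then for every $t\in[\tau,T]$ the state variation $$\Psi(t)=\frac{\partial_+}{\partial\epsilon}x^\epsilon(t)\Big|_{\epsilon=0}=\lim_{\epsilon\to0^+}\frac{x^\epsilon(t)-x(t)}{\epsilon}$$ exists, and $\Psi(t)=\Psi_1(t)$ for $t\in[\tau,1)$, $\Psi(t)=\Psi_i(t)$ for $t\in[i-1,i)$, $i\in\{2,\dots,T\}$, and $\Psi(T)=\frac{\partial}{\partial x}g(x_T(T),y_T)\Psi_T(T)$, where $\Psi_1$ is the unique solution on $[\tau,1]$ of $$\dot\Psi_1(t)=\frac{\partial}{\partial x}f(x_1(t),u(t))\Psi_1(t),\qquad \Psi_1(\tau)=f(x_1(\tau),v)-f(x_1(\tau),u(\tau)),$$ and for $i\ge2$, $\Psi_i$ is defined on $[i-1,i]$ by $$\Psi_i(i-1)=\frac{\partial}{\partial x}g(x_{i-1}(i-1),y_{i-1})\Psi_{i-1}(i-1),\qquad \dot\Psi_i(t)=\frac{\partial}{\partial x}f(x_i(t),u(t))\Psi_i(t).$$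
   Context: Fix positive integers $T,m,n_x,n_y$ and $\rho_{\max}\in(0,\infty)$; $B(0,\rho_{\max})$ is the closed Euclidean ball of radius $\rho_{\max}$ in $\mathbb{R}^m$; $U$ is the set of piecewise continuous $u:[0,T]\to\mathbb{R}^m$ with $\|u(t)\|_2\le\rho_{\max}$ for all $t$. $f:\mathbb{R}^{n_x}\times\mathbb{R}^m\to\mathbb{R}^{n_x}$ is continuously differentiable and there is $K_1\in[1,\infty)$ with $\|f(x',u')-f(x'',u'')\|_2\le K_1(\|x'-x''\|_2+\|u'-u''\|_2)$ for all $x',x''$ and $u',u''\in B(0,\rho_{\max})$. $g:\mathbb{R}^{n_x}\times\mathbb{R}^{n_y}\to\mathbb{R}^{n_x}$ is continuous and differentiable in its first argument, and there are $K_2,\dots,K_5\ge0$ and positive integers $L_1,L_2$ such that for all $x,y$ both $\|g(x,y)\|_2$ and $\|\frac{\partial}{\partial x}g(x,y)\|_2$ are at most $K_2+K_3\|x\|_2^{L_1}+K_4\|y\|_2^{L_2}+K_5\|x\|_2^{L_1}\|y\|_2^{L_2}$. For a control $w\in U$ the hybrid trajectory from $x_0$ is: $x_1$ on $[0,1]$ solves $\dot x_1=f(x_1,w)$, $x_1(0)=x_0$; for $i=2,\dots,T$, $x_i$ on $[i-1,i]$ solves $\dot x_i=f(x_i,w)$ with $x_i(i-1)=g(x_{i-1}(i-1),y_{i-1})$; $x(t)=x_i(t)$ for $t\in[i-1,i)$, and $x(T)=g(x_T(T),y_T)$. Perturbed control: for $\epsilon\in[0,\tau]$, $u^\epsilon(t)=v$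 if $t\in(\tau-\epsilon,\tau]$ and $u^\epsilon(t)=u(t)$ otherwise; $x^\epsilon$ is the trajectory under $u^\epsilon$ and $x=x^0$. *)

theory Defs
  imports "HOL-Analysis.Analysis"
begin

definition piecewise_continuous_on :: "real \<Rightarrow> real \<Rightarrow> (real \<Rightarrow> 'a::real_normed_vector) \<Rightarrow> bool" where
  "piecewise_continuous_on a b w \<longleftrightarrow>
     (\<exists>D. finite D \<and> D \<subseteq> {a..b} \<and> continuous_on ({a..b} - D) w \<and>
        (\<forall>d\<in>D. (a < d \<longrightarrow> (\<exists>l. (w \<longlongrightarrow> l) (at_left d))) \<and>
                (d < b \<longrightarrow> (\<exists>l. (w \<longlongrightarrow> l) (at_right d)))))"

definition admissible :: "nat \<Rightarrow> real \<Rightarrow> (real \<Rightarrow> 'a::real_normed_vector) \<Rightarrow> bool" where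
  "admissible T \<rho> w \<longleftrightarrow> piecewise_continuous_on 0 (real T) w \<and> (\<forall>t\<in>{0..real T}. norm (w t) \<le> \<rho>)"

definition pert :: "(real \<Rightarrow> 'a) \<Rightarrow> 'a \<Rightarrow> real \<Rightarrow> real \<Rightarrow> real \<Rightarrow> 'a" where
  "pert w v \<tau> \<epsilon> t = (if t \<in> {\<tau> - \<epsilon><..\<tau>} then v else w t)"

text \<open>xs i is the i-th mode x_i on [i-1,i]; (Caratheodory) solution in integral form.\<close>
definition is_hybrid_traj ::
  "('x::euclidean_space \<times> 'u::euclidean_space \<Rightarrow> 'x) \<Rightarrow> ('x \<Rightarrow> 'y \<Rightarrow> 'x) \<Rightarrow> nat \<Rightarrow> 'x \<Rightarrow>
   (nat \<Rightarrow> 'y) \<Rightarrow> (real \<Rightarrow> 'u) \<Rightarrow> (nat \<Rightarrow> real \<Rightarrow> 'x) \<Rightarrow> bool" where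
  "is_hybrid_traj f g T x0 y w xs \<longleftrightarrow>
     xs 1 0 = x0 \<and>
     (\<forall>i\<in>{2..T}. xs i (real i - 1) = g (xs (i - 1) (real i - 1)) (y (i - 1))) \<and>
     (\<forall>i\<in>{1..T}. continuous_on {real i - 1..real i} (xs i) \<and>
        (\<forall>t\<in>{real i - 1..real i}.
           ((\<lambda>s. f (xs i s, w s)) has_integral (xs i t - xs i (real i - 1))) {real i - 1..t}))"

text \<open>The full state x(t): x_i(t) on [i-1,i), and x(T) = g(x_T(T), y_T).\<close>
definition hybrid_state :: "('x \<Rightarrow> 'y \<Rightarrow> 'x) \<Rightarrow> nat \<Rightarrow> (nat \<Rightarrow> 'y) \<Rightarrow> (nat \<Rightarrow> real \<Rightarrow> 'x) \<Rightarrow> real \<Rightarrow> 'x" where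
  "hybrid_state g T y xs t =
     (if t = real T then g (xs T (real T)) (y T) else xs (nat \<lfloor>t\<rfloor> + 1) t)"

definition partial_x :: "(('x::real_normed_vector \<times> 'u::real_normed_vector) \<Rightarrow>\<^sub>L 'z::real_normed_vector) \<Rightarrow> 'x \<Rightarrow> 'z" where
  "partial_x D h = blinfun_apply D (h, 0)"

end

theory Submission
  imports Defs
begin


thm integrable_subinterval_real

lemma gronwall:
  fixes \<phi> :: "real \<Rightarrow> real"
  assumes ab: "a \<le> b" and cont: "continuous_on {a..b} \<phi>" and K: "K \<ge> 0"
    and le: "\<And>t. t \<in> {a..b} \<Longrightarrow> \<phi> t \<le> C + K * integral {a..t} \<phi>"
    and t: "t \<in> {a..b}"
  shows "\<phi> t \<le> C * exp (K * (t - a))"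
proof -
  define I where "I = (\<lambda>t. integral {a..t} \<phi>)"
  define H where "H = (\<lambda>t. exp (- K * (t - a)) * (C + K * I t))"
  have dI: "(I has_real_derivative \<phi> s) (at s within {a..b})" if "s \<in> {a..b}" for s
    using integral_has_vector_derivative[OF cont that] unfolding I_def
    by (simp add: has_real_derivative_iff_has_vector_derivative)
  have dH: "(H has_real_derivative (exp (- K * (s - a)) * (K * (\<phi> s - (C + K * I s))))) (at s within {a..b})"
    if "s \<in> {a..b}" for s
    unfolding H_def
    by (rule derivative_eq_intros dI[OF that] | simp)+ (simp add: algebra_simps)
  have Hcont: "continuous_on {a..b} H"
    using dH by (meson DERIV_continuous continuous_at_imp_continuous_on continuous_on_eq_continuous_within)
  have "H t \<le> H a"
  proof (rule DERIV_nonpos_imp_decreasing_open[of a t])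
    show "a \<le> t" using t by auto
    show "continuous_on {a..t} H" using t by (intro continuous_on_subset[OF Hcont]) auto
    fix x assume x: "a < x" "x < t"
    then have xab: "x \<in> {a..b}" using t by auto
    have "at x within {a..b} = at x" using x t by (intro at_within_Icc_at) auto
    then have "(H has_real_derivative (exp (- K * (x - a)) * (K * (\<phi> x - (C + K * I x))))) (at x)"
      using dH[OF xab] by simp
    moreover have "exp (- K * (x - a)) * (K * (\<phi> x - (C + K * I x))) \<le> 0"
      using le[OF xab] K unfolding I_def by (intro mult_nonneg_nonpos mult_nonneg_nonpos) auto
    ultimately show "\<exists>y. (H has_real_derivative y) (at x) \<and> y \<le> 0" by blast
  qed
  also have "H a = C" unfolding H_def I_def by simp
  finally have "exp (- K * (t - a)) * (C + K * I t) \<le> C" unfolding H_def .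
  then have "exp (K * (t - a)) * (exp (- K * (t - a)) * (C + K * I t)) \<le> exp (K * (t - a)) * C"
    by (intro mult_left_mono) auto
  also have "exp (K * (t - a)) * (exp (- K * (t - a)) * (C + K * I t)) = C + K * I t"
    by (simp add: exp_minus[symmetric] mult.assoc[symmetric] exp_add[symmetric])
  finally have "C + K * I t \<le> C * exp (K * (t - a))" by (simp add: mult.commute)
  then show ?thesis using le[OF t] unfolding I_def by simp
qed


lemma integral_shift:
  fixes F :: "real \<Rightarrow> 'a::euclidean_space"
  assumes X: "\<And>t. t\<in>{a..b} \<Longrightarrow> (F has_integral (X t - X a)) {a..t}"
    and "a \<le> c" "c \<le> t" "t \<le> b"
  shows "(F has_integral (X t - X c)) {c..t}"
proof -
  have "F integrable_on {a..t}" using X[of t] assms(2-4) by (auto simp: has_integral_integrable_integral)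
  then have "F integrable_on {c..t}" by (rule integrable_subinterval_real) (use assms in auto)
  then obtain j where j: "(F has_integral j) {c..t}" by blast
  have "(F has_integral (X c - X a + j)) {a..t}"
    by (rule has_integral_combine[OF _ _ X[of c] j]) (use assms in auto)
  moreover have "(F has_integral (X t - X a)) {a..t}" using X[of t] assms(2-4) by auto
  ultimately have "X c - X a + j = X t - X a" by (rule has_integral_unique)
  then have "j = X t - X c" by (simp add: algebra_simps)
  with j show ?thesis by simp
qed

lemma diff_quot_chain:
  fixes g :: "'a::real_normed_vector \<Rightarrow> 'b::real_normed_vector"
  assumes gd: "(g has_derivative G) (at X)"
    and lim: "((\<lambda>\<epsilon>. (XE \<epsilon> - X) /\<^sub>R \<epsilon>) \<longlongrightarrow> P) (at_right 0)"
  shows "((\<lambda>\<epsilon>. (g (XE \<epsilon>) - g X) /\<^sub>R \<epsilon>) \<longlongrightarrow> G P) (at_right 0)"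
proof -
  have bl: "bounded_linear G" using gd by (simp add: has_derivative_at_alt)
  define q where "q = (\<lambda>\<epsilon>. (XE \<epsilon> - X) /\<^sub>R \<epsilon>)"
  have r: "((\<lambda>\<epsilon>. (g (XE \<epsilon>) - g X) /\<^sub>R \<epsilon> - G (q \<epsilon>)) \<longlongrightarrow> 0) (at_right 0)"
  proof (rule tendstoI)
    fix e :: real assume e: "e > 0"
    define B where "B = norm P + 1"
    have B: "B > 0" unfolding B_def by (simp add: add_nonneg_pos)
    have ev1: "eventually (\<lambda>\<epsilon>. dist (q \<epsilon>) P < 1) (at_right 0)"
      using lim unfolding q_def by (rule tendstoD) simp
    have eB: "e / (2 * B) > 0" using e B by simp
    obtain d where d: "d > 0" and dd: "\<And>y. norm (y - X) < d \<Longrightarrow>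
        norm (g y - g X - G (y - X)) \<le> (e / (2 * B)) * norm (y - X)"
      using gd eB unfolding has_derivative_at_alt by blast
    have ev2: "eventually (\<lambda>\<epsilon>. 0 < \<epsilon> \<and> \<epsilon> < d / B) (at_right 0)"
      unfolding eventually_at_right_field using d B by (intro exI[of _ "d/B"]) auto
    show "eventually (\<lambda>\<epsilon>. dist ((g (XE \<epsilon>) - g X) /\<^sub>R \<epsilon> - G (q \<epsilon>)) 0 < e) (at_right 0)"
      using ev1 ev2
    proof eventually_elim
      case (elim \<epsilon>)
      then have eps: "\<epsilon> > 0" "\<epsilon> < d / B" by auto
      have nq: "norm (q \<epsilon>) < B" using elim(1) norm_triangle_sub[of "q \<epsilon>" P]
        unfolding B_def dist_norm by simp
      have XE: "XE \<epsilon> - X = \<epsilon> *\<^sub>R q \<epsilon>" unfolding q_def using eps by simp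
      have "norm (XE \<epsilon> - X) = \<epsilon> * norm (q \<epsilon>)" using XE eps by simp
      also have "\<dots> < \<epsilon> * B" using nq eps by simp
      also have "\<dots> < d" using eps B by (simp add: field_simps)
      finally have "norm (XE \<epsilon> - X) < d" .
      then have "norm (g (XE \<epsilon>) - g X - G (XE \<epsilon> - X)) \<le> (e / (2 * B)) * (\<epsilon> * norm (q \<epsilon>))"
        using dd[of "XE \<epsilon>"] XE eps by simp
      moreover have "G (XE \<epsilon> - X) = \<epsilon> *\<^sub>R G (q \<epsilon>)" using XE linear.scaleR[OF bounded_linear.linear[OF bl]] by simp
      moreover have "(g (XE \<epsilon>) - g X) /\<^sub>R \<epsilon> - G (q \<epsilon>) = (g (XE \<epsilon>) - g X - \<epsilon> *\<^sub>R G (q \<epsilon>)) /\<^sub>R \<epsilon>"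
        using eps by (simp add: algebra_simps)
      ultimately have "dist ((g (XE \<epsilon>) - g X) /\<^sub>R \<epsilon> - G (q \<epsilon>)) 0 = norm (g (XE \<epsilon>) - g X - G (XE \<epsilon> - X)) / \<epsilon>"
        using eps by (simp add: dist_norm) (rule divide_inverse_commute[symmetric])
      also have "\<dots> \<le> (e / (2 * B)) * (\<epsilon> * norm (q \<epsilon>)) / \<epsilon>"
        using \<open>norm (g (XE \<epsilon>) - g X - G (XE \<epsilon> - X)) \<le> _\<close> eps by (intro divide_right_mono) auto
      also have "\<dots> = (e / (2 * B)) * norm (q \<epsilon>)" using eps by simp
      also have "\<dots> \<le> (e / (2 * B)) * B" using nq e B by (intro mult_left_mono) auto
      also have "\<dots> < e" using e B by simp
      finally show ?case .
    qed
  qed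
  have "((\<lambda>\<epsilon>. G (q \<epsilon>)) \<longlongrightarrow> G P) (at_right 0)"
    using bounded_linear.tendsto[OF bl lim] unfolding q_def .
  from tendsto_add[OF r this] show ?thesis by simp
qed



lemma lip_gronwall:
  fixes D F :: "real \<Rightarrow> 'a::euclidean_space"
  assumes ab: "a \<le> b" and K: "K \<ge> 0" and c: "c \<ge> 0"
    and Dc: "continuous_on {a..b} D"
    and DF: "\<And>t. t \<in> {a..b} \<Longrightarrow> (F has_integral (D t - D a)) {a..t}"
    and Fb: "\<And>s. s \<in> {a..b} \<Longrightarrow> norm (F s) \<le> K * norm (D s) + c"
    and t: "t \<in> {a..b}"
  shows "norm (D t) \<le> (norm (D a) + c * (b - a)) * exp (K * (t - a))"
proof (rule gronwall[OF ab _ K _ t])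
  show phic: "continuous_on {a..b} (\<lambda>s. norm (D s))" using Dc by (intro continuous_intros)
  fix s assume s: "s \<in> {a..b}"
  have sub: "{a..s} \<subseteq> {a..b}" using s by auto
  have int1: "(\<lambda>r. norm (D r)) integrable_on {a..s}"
    by (rule integrable_continuous_interval, rule continuous_on_subset[OF phic sub])
  have int2: "(\<lambda>r. K * norm (D r) + c) integrable_on {a..s}"
    by (rule integrable_continuous_interval, rule continuous_on_subset[OF _ sub])
      (use Dc in \<open>intro continuous_intros\<close>)
  have "norm (D s - D a) = norm (integral {a..s} F)"
    using DF[OF s] by (simp add: has_integral_integrable_integral)
  also have "\<dots> \<le> integral {a..s} (\<lambda>r. K * norm (D r) + c)"
  proof (rule integral_norm_bound_integral)
    show "F integrable_on {a..s}" using DF[OF s] by blast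
    show "(\<lambda>r. K * norm (D r) + c) integrable_on {a..s}" by (rule int2)
    fix r assume "r \<in> {a..s}" then show "norm (F r) \<le> K * norm (D r) + c" using Fb sub by auto
  qed
  also have "\<dots> = K * integral {a..s} (\<lambda>r. norm (D r)) + c * (s - a)"
  proof -
    have "integral {a..s} (\<lambda>r. K * norm (D r) + c) = integral {a..s} (\<lambda>r. K * norm (D r)) + integral {a..s} (\<lambda>r. c)"
    proof (rule integral_add)
      show "(\<lambda>r. K * norm (D r)) integrable_on {a..s}"
        by (rule integrable_continuous_interval, rule continuous_on_subset[OF _ sub])
          (use Dc in \<open>intro continuous_intros\<close>)
    qed auto
    also have "integral {a..s} (\<lambda>r. K * norm (D r)) = K * integral {a..s} (\<lambda>r. norm (D r))"
      by (rule integral_mult_right)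
    also have "integral {a..s} (\<lambda>r. c) = c * (s - a)" using s by simp
    finally show ?thesis .
  qed
  also have "\<dots> \<le> K * integral {a..s} (\<lambda>r. norm (D r)) + c * (b - a)"
    using c s by (intro add_left_mono mult_left_mono) auto
  finally have "norm (D s - D a) \<le> K * integral {a..s} (\<lambda>r. norm (D r)) + c * (b - a)" .
  moreover have "norm (D s) \<le> norm (D a) + norm (D s - D a)"
    by (metis add_diff_cancel_left' norm_triangle_ineq diff_add_cancel add.commute)
  ultimately show "norm (D s) \<le> norm (D a) + c * (b - a) + K * integral {a..s} (\<lambda>s. norm (D s))"
    by simp
qed


lemma partial_x_diff: "partial_x D (h1 - h2) = partial_x D h1 - partial_x D h2"
  unfolding partial_x_def by (metis blinfun.diff_right diff_zero prod.collapse minus_prod_def fst_conv snd_conv)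

lemma partial_x_scaleR: "partial_x D (c *\<^sub>R h) = c *\<^sub>R partial_x D h"
  unfolding partial_x_def by (metis blinfun.scaleR_right scaleR_Pair scaleR_zero_right)

lemma norm_partial_x: "norm (partial_x D h) \<le> norm D * norm h"
  unfolding partial_x_def using norm_blinfun[of D "(h, 0)"] by (simp add: norm_Pair)

lemma mode_lemma:
  fixes f :: "'x::euclidean_space \<times> 'u::euclidean_space \<Rightarrow> 'x"
    and f' :: "'x \<times> 'u \<Rightarrow> (('x \<times> 'u) \<Rightarrow>\<^sub>L 'x)"
    and w :: "real \<Rightarrow> 'u" and X P :: "real \<Rightarrow> 'x" and XE :: "real \<Rightarrow> real \<Rightarrow> 'x"
  assumes f_deriv: "\<And>p. (f has_derivative blinfun_apply (f' p)) (at p)"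
    and f'_cont: "continuous_on UNIV f'"
    and K1: "K1 \<ge> 0"
    and f_lip: "\<And>x1 x2 u1 u2. norm u1 \<le> \<rho> \<Longrightarrow> norm u2 \<le> \<rho> \<Longrightarrow>
                  norm (f (x1, u1) - f (x2, u2)) \<le> K1 * (norm (x1 - x2) + norm (u1 - u2))"
    and ab: "a \<le> b" and ee: "ee > 0"
    and w_bd: "\<And>s. s \<in> {a..b} \<Longrightarrow> norm (w s) \<le> \<rho>"
    and X_cont: "continuous_on {a..b} X"
    and X_int: "\<And>t. t \<in> {a..b} \<Longrightarrow> ((\<lambda>s. f (X s, w s)) has_integral (X t - X a)) {a..t}"
    and XE_cont: "\<And>\<epsilon>. \<epsilon> \<in> {0<..<ee} \<Longrightarrow> continuous_on {a..b} (XE \<epsilon>)"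
    and XE_int: "\<And>\<epsilon> t. \<epsilon> \<in> {0<..<ee} \<Longrightarrow> t \<in> {a..b} \<Longrightarrow>
        ((\<lambda>s. f (XE \<epsilon> s, w s)) has_integral (XE \<epsilon> t - XE \<epsilon> a)) {a..t}"
    and P_cont: "continuous_on {a..b} P"
    and P_int: "\<And>t. t \<in> {a..b} \<Longrightarrow>
        ((\<lambda>s. partial_x (f' (X s, w s)) (P s)) has_integral (P t - P a)) {a..t}"
    and init: "((\<lambda>\<epsilon>. (XE \<epsilon> a - X a) /\<^sub>R \<epsilon>) \<longlongrightarrow> P a) (at_right 0)"
    and t: "t \<in> {a..b}"
  shows "((\<lambda>\<epsilon>. (XE \<epsilon> t - X t) /\<^sub>R \<epsilon>) \<longlongrightarrow> P t) (at_right 0)"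
proof -
  have "norm (w a) \<le> \<rho>" using w_bd ab by simp
  then have rho: "\<rho> \<ge> 0" using norm_ge_zero order_trans by blast
  define B0 where "B0 = norm (P a) + 1"
  have B0: "B0 > 0" unfolding B0_def by (simp add: add_nonneg_pos)
  define B where "B = B0 * exp (K1 * (b - a))"
  have B: "B > 0" unfolding B_def using B0 by simp
  have bound: "norm (XE \<epsilon> s - X s) \<le> B * \<epsilon>"
    if eps: "\<epsilon> \<in> {0<..<ee}" and na: "norm ((XE \<epsilon> a - X a) /\<^sub>R \<epsilon>) < B0" and s: "s \<in> {a..b}" for \<epsilon> s
  proof -
    have "norm (XE \<epsilon> s - X s) \<le> (norm (XE \<epsilon> a - X a) + 0 * (b - a)) * exp (K1 * (s - a))"
    proof (rule lip_gronwall[OF ab K1 order_refl _ _ _ s,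
          where F = "\<lambda>r. f (XE \<epsilon> r, w r) - f (X r, w r)"])
      show "continuous_on {a..b} (\<lambda>s. XE \<epsilon> s - X s)"
        using XE_cont[OF eps] X_cont by (intro continuous_intros)
      fix t assume t: "t \<in> {a..b}"
      show "((\<lambda>r. f (XE \<epsilon> r, w r) - f (X r, w r)) has_integral (XE \<epsilon> t - X t - (XE \<epsilon> a - X a))) {a..t}"
        using has_integral_diff[OF XE_int[OF eps t] X_int[OF t]] by (simp add: algebra_simps)
      show "norm (f (XE \<epsilon> t, w t) - f (X t, w t)) \<le> K1 * norm (XE \<epsilon> t - X t) + 0"
        using f_lip[OF w_bd[OF t] w_bd[OF t]] by simp
    qed
    also have "\<dots> \<le> (B0 * \<epsilon>) * exp (K1 * (b - a))"
    proof (intro mult_mono)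
      show "norm (XE \<epsilon> a - X a) + 0 * (b - a) \<le> B0 * \<epsilon>"
      proof -
        have "norm (XE \<epsilon> a - X a) = \<epsilon> * norm ((XE \<epsilon> a - X a) /\<^sub>R \<epsilon>)" using eps by simp
        also have "\<dots> \<le> \<epsilon> * B0" using na eps by (intro mult_left_mono) auto
        finally show ?thesis by (simp add: mult.commute)
      qed
      show "exp (K1 * (s - a)) \<le> exp (K1 * (b - a))" using s K1 by (auto intro: mult_left_mono)
    qed (use B0 eps in auto)
    finally show ?thesis unfolding B_def by (simp add: field_simps)
  qed
  obtain R where R: "R > 0" "\<And>s. s \<in> {a..b} \<Longrightarrow> norm (X s) \<le> R"
    using compact_imp_bounded[OF compact_continuous_image[OF X_cont compact_Icc]]
    unfolding bounded_pos by auto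
  define S where "S = cball (0::'x \<times> 'u) (R + 1 + \<rho>)"
  have cS: "compact S" unfolding S_def by simp
  obtain KA where KA: "KA > 0" "\<And>p. p \<in> S \<Longrightarrow> norm (f' p) \<le> KA"
    using compact_imp_bounded[OF compact_continuous_image[OF continuous_on_subset[OF f'_cont subset_UNIV] cS]]
    unfolding bounded_pos by auto
  have uc: "uniformly_continuous_on S f'"
    by (rule compact_uniformly_continuous[OF continuous_on_subset[OF f'_cont subset_UNIV] cS])
  define E where "E = exp (KA * (b - a))"
  have E: "E \<ge> 1" unfolding E_def using KA ab by simp
  show ?thesis
  proof (rule tendstoI)
    fix e :: real assume e: "e > 0"
    define \<eta> where "\<eta> = e / (4 * E * (B * (b - a) + 1))"
    have "B * (b - a) \<ge> 0" using B ab by simp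
    then have \<eta>: "\<eta> > 0" unfolding \<eta>_def using e E by (intro divide_pos_pos mult_pos_pos) auto
    have \<eta>B: "\<eta> * B * (b - a) * E \<le> e / 4"
    proof -
      have gen: "e / (4 * E * (M + 1)) * M * E = e / 4 * (M / (M + 1))" if "M + 1 \<noteq> 0" for M
      proof -
        have "E \<noteq> 0" using E by simp
        then show ?thesis using that by (auto simp: divide_simps)
      qed
      have "\<eta> * B * (b - a) * E = e / 4 * ((B * (b - a)) / (B * (b - a) + 1))"
        unfolding \<eta>_def using gen[of "B * (b - a)"] \<open>B * (b - a) \<ge> 0\<close> by (simp add: mult.assoc)
      also have "\<dots> \<le> e / 4 * 1" using e \<open>B * (b - a) \<ge> 0\<close> by (intro mult_left_mono) auto
      finally show ?thesis by simp
    qed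
    obtain \<delta> where \<delta>: "\<delta> > 0" and \<delta>uc: "\<And>p q. p \<in> S \<Longrightarrow> q \<in> S \<Longrightarrow> dist q p < \<delta> \<Longrightarrow> dist (f' q) (f' p) < \<eta>"
      using uc \<eta> unfolding uniformly_continuous_on_def by metis
    have ev1: "eventually (\<lambda>\<epsilon>. dist ((XE \<epsilon> a - X a) /\<^sub>R \<epsilon>) (P a) < min 1 (e / (2 * E))) (at_right 0)"
      using init by (rule tendstoD) (use e E in simp)
    have ev2: "eventually (\<lambda>\<epsilon>. 0 < \<epsilon> \<and> \<epsilon> < min ee (min (\<delta> / B) (1 / B))) (at_right 0)"
      unfolding eventually_at_right_field using ee \<delta> B
      by (intro exI[of _ "min ee (min (\<delta> / B) (1 / B))"]) auto
    show "eventually (\<lambda>\<epsilon>. dist ((XE \<epsilon> t - X t) /\<^sub>R \<epsilon>) (P t) < e) (at_right 0)"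
      using ev1 ev2
    proof eventually_elim
      case (elim \<epsilon>)
      then have eps: "\<epsilon> \<in> {0<..<ee}" "\<epsilon> < \<delta> / B" "\<epsilon> < 1 / B" by auto
      have na: "norm ((XE \<epsilon> a - X a) /\<^sub>R \<epsilon>) < B0"
        using elim(1) norm_triangle_sub[of "(XE \<epsilon> a - X a) /\<^sub>R \<epsilon>" "P a"]
        unfolding B0_def dist_norm by simp
      have Beps: "B * \<epsilon> < \<delta>" "B * \<epsilon> < 1" using eps B by (simp_all add: field_simps)
      define z where "z = (\<lambda>s. (XE \<epsilon> s - X s) /\<^sub>R \<epsilon> - P s)"
      define G where "G = (\<lambda>s. (f (XE \<epsilon> s, w s) - f (X s, w s)) /\<^sub>R \<epsilon> - partial_x (f' (X s, w s)) (P s))"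
      have Gb: "norm (G s) \<le> KA * norm (z s) + \<eta> * B" if s: "s \<in> {a..b}" for s
      proof -
        define p where "p = (X s, w s)"
        define q where "q = (XE \<epsilon> s, w s)"
        define \<Delta> where "\<Delta> = XE \<epsilon> s - X s"
        have nD: "norm \<Delta> \<le> B * \<epsilon>" unfolding \<Delta>_def using bound[OF eps(1) na s] .
        have qp: "q - p = (\<Delta>, 0)" unfolding p_def q_def \<Delta>_def by simp
        have inS: "(X s + c *\<^sub>R \<Delta>, w s) \<in> S" if c: "c \<in> {0..1}" for c
        proof -
          have "norm (X s + c *\<^sub>R \<Delta>, w s) \<le> norm (X s + c *\<^sub>R \<Delta>) + norm (w s)" by (rule norm_Pair_le)
          also have "\<dots> \<le> R + 1 + \<rho>"
          proof -
            have "norm (c *\<^sub>R \<Delta>) \<le> norm \<Delta>" using c by (auto intro: mult_left_le_one_le)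
            then have "norm (c *\<^sub>R \<Delta>) \<le> 1" using nD Beps by linarith
            then show ?thesis using R(2)[OF s] w_bd[OF s] norm_triangle_ineq[of "X s" "c *\<^sub>R \<Delta>"] by linarith
          qed
          finally show ?thesis unfolding S_def by simp
        qed
        have pS: "p \<in> S" using inS[of 0] unfolding p_def by simp
        have lin: "norm (f q - f p - blinfun_apply (f' p) (q - p)) \<le> norm (q - p) * \<eta>"
        proof (rule differentiable_bound_linearization[where S = "S \<inter> ball p \<delta>" and f' = "\<lambda>z. blinfun_apply (f' z)"])
          fix c :: real assume c: "c \<in> {0..1}"
          have "p + c *\<^sub>R (q - p) = p + c *\<^sub>R (\<Delta>, 0)" by (simp only: qp)
          also have "\<dots> = (X s + c *\<^sub>R \<Delta>, w s)" by (simp add: p_def)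
          finally have eq: "p + c *\<^sub>R (q - p) = (X s + c *\<^sub>R \<Delta>, w s)" .
          have "norm (c *\<^sub>R (q - p)) \<le> norm (q - p)" using c by (auto intro: mult_left_le_one_le)
          moreover have "norm (q - p) < \<delta>" using qp nD Beps by (simp add: norm_Pair)
          ultimately have "dist p (p + c *\<^sub>R (q - p)) < \<delta>" by (simp add: dist_norm)
          then show "p + c *\<^sub>R (q - p) \<in> S \<inter> ball p \<delta>" using inS[OF c] eq by simp
        next
          fix x assume "x \<in> S \<inter> ball p \<delta>"
          show "(f has_derivative blinfun_apply (f' x)) (at x within S \<inter> ball p \<delta>)"
            by (rule has_derivative_at_withinI[OF f_deriv])
        next
          fix x assume x: "x \<in> S \<inter> ball p \<delta>"
          have "onorm (\<lambda>y. blinfun_apply (f' x) y - blinfun_apply (f' p) y) = norm (f' x - f' p)"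
            by (simp add: norm_blinfun.rep_eq minus_blinfun.rep_eq fun_diff_def)
          also have "\<dots> = dist (f' x) (f' p)" by (simp add: dist_norm)
          also have "\<dots> < \<eta>" using \<delta>uc[OF pS, of x] x by (simp add: dist_commute)
          finally show "onorm (blinfun_apply (f' x) - blinfun_apply (f' p)) \<le> \<eta>"
            by (simp add: fun_diff_def)
        next
          show "p \<in> S \<inter> ball p \<delta>" using pS \<delta> by simp
        qed
        have fq: "blinfun_apply (f' p) (q - p) = partial_x (f' p) \<Delta>" unfolding qp partial_x_def ..
        have nqp: "norm (q - p) = norm \<Delta>" unfolding qp by (simp add: norm_Pair)
        have Geq: "G s = (f q - f p - partial_x (f' p) \<Delta>) /\<^sub>R \<epsilon> + partial_x (f' p) (z s)"
          unfolding G_def z_def p_def q_def \<Delta>_def partial_x_diff partial_x_scaleR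
          using eps by (simp add: algebra_simps)
        have "norm ((f q - f p - partial_x (f' p) \<Delta>) /\<^sub>R \<epsilon>) = norm (f q - f p - partial_x (f' p) \<Delta>) / \<epsilon>"
          using eps by (simp add: divide_inverse_commute)
        also have "\<dots> \<le> (B * \<epsilon> * \<eta>) / \<epsilon>"
          using lin fq nqp nD \<eta> eps by (intro divide_right_mono) (auto intro: order_trans mult_right_mono)
        also have "\<dots> = \<eta> * B" using eps by simp
        finally have n1: "norm ((f q - f p - partial_x (f' p) \<Delta>) /\<^sub>R \<epsilon>) \<le> \<eta> * B" .
        have n2: "norm (partial_x (f' p) (z s)) \<le> KA * norm (z s)"
          using norm_partial_x[of "f' p" "z s"] KA(2)[OF pS] by (meson mult_right_mono norm_ge_zero order_trans)
        show ?thesis unfolding Geq using n1 n2 norm_triangle_ineq by (smt (verit))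
      qed
      have zc: "continuous_on {a..b} z"
        unfolding z_def using XE_cont[OF eps(1)] X_cont P_cont by (intro continuous_intros)
      have zint: "(G has_integral (z t' - z a)) {a..t'}" if t': "t' \<in> {a..b}" for t'
      proof -
        have "((\<lambda>s. (f (XE \<epsilon> s, w s) - f (X s, w s)) /\<^sub>R \<epsilon>) has_integral
                ((XE \<epsilon> t' - XE \<epsilon> a - (X t' - X a)) /\<^sub>R \<epsilon>)) {a..t'}"
          using has_integral_cmul[OF has_integral_diff[OF XE_int[OF eps(1) t'] X_int[OF t']], of "inverse \<epsilon>"] .
        from has_integral_diff[OF this P_int[OF t']]
        show ?thesis unfolding G_def z_def by (simp add: algebra_simps)
      qed
      have "norm (z t) \<le> (norm (z a) + \<eta> * B * (b - a)) * exp (KA * (t - a))"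
        by (rule lip_gronwall[OF ab _ _ zc zint Gb t]) (use KA \<eta> B in auto)
      also have "\<dots> \<le> (norm (z a) + \<eta> * B * (b - a)) * E"
        unfolding E_def using t KA \<eta> B ab by (intro mult_left_mono) (auto intro: mult_left_mono)
      also have "\<dots> = norm (z a) * E + \<eta> * B * (b - a) * E" by (simp add: algebra_simps)
      also have "\<dots> < e / 2 + e / 4"
      proof (rule add_less_le_mono)
        have "norm (z a) < e / (2 * E)" using elim(1) unfolding z_def dist_norm by simp
        then show "norm (z a) * E < e / 2" using E by (simp add: field_simps)
      qed (rule \<eta>B)
      also have "\<dots> < e" using e by simp
      finally show ?case unfolding z_def dist_norm .
    qed
  qed
qed



lemma needle_lemma:
  fixes f :: "'x::euclidean_space \<times> 'u::euclidean_space \<Rightarrow> 'x"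
    and w :: "real \<Rightarrow> 'u" and X :: "real \<Rightarrow> 'x" and XE :: "real \<Rightarrow> real \<Rightarrow> 'x"
  assumes K1: "K1 > 0" and rho: "\<rho> > 0"
    and f_lip: "\<And>x1 x2 u1 u2. norm u1 \<le> \<rho> \<Longrightarrow> norm u2 \<le> \<rho> \<Longrightarrow>
                  norm (f (x1, u1) - f (x2, u2)) \<le> K1 * (norm (x1 - x2) + norm (u1 - u2))"
    and tau: "0 < \<tau>" "\<tau> < 1"
    and w_bd: "\<And>s. s \<in> {0..1} \<Longrightarrow> norm (w s) \<le> \<rho>"
    and v: "norm v \<le> \<rho>"
    and w_left: "(w \<longlongrightarrow> w \<tau>) (at_left \<tau>)"
    and X_cont: "continuous_on {0..1} X"
    and X_int: "\<And>t. t \<in> {0..1} \<Longrightarrow> ((\<lambda>s. f (X s, w s)) has_integral (X t - X 0)) {0..t}"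
    and XE_cont: "\<And>\<epsilon>. \<epsilon> \<in> {0<..\<tau>} \<Longrightarrow> continuous_on {0..1} (XE \<epsilon>)"
    and XE_int: "\<And>\<epsilon> t. \<epsilon> \<in> {0<..\<tau>} \<Longrightarrow> t \<in> {0..1} \<Longrightarrow>
        ((\<lambda>s. f (XE \<epsilon> s, pert w v \<tau> \<epsilon> s)) has_integral (XE \<epsilon> t - XE \<epsilon> 0)) {0..t}"
    and XE0: "\<And>\<epsilon>. \<epsilon> \<in> {0<..\<tau>} \<Longrightarrow> XE \<epsilon> 0 = X 0"
  shows "((\<lambda>\<epsilon>. (XE \<epsilon> \<tau> - X \<tau>) /\<^sub>R \<epsilon>) \<longlongrightarrow> f (X \<tau>, v) - f (X \<tau>, w \<tau>)) (at_right 0)"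
proof -
  define M where "M = 2 * \<rho> * K1 * exp K1"
  have M: "M > 0" unfolding M_def using K1 rho by simp
  define F0 where "F0 = f (X \<tau>, v) - f (X \<tau>, w \<tau>)"
  have pert_bd: "norm (pert w v \<tau> \<epsilon> s) \<le> \<rho>" if "s \<in> {0..1}" for \<epsilon> s
    using w_bd[OF that] v unfolding pert_def by auto
  have key: "(\<forall>s\<in>{\<tau>-\<epsilon>..\<tau>}. norm (XE \<epsilon> s - X s) \<le> M * \<epsilon>) \<and>
      ((\<lambda>s. f (XE \<epsilon> s, v) - f (X s, w s)) has_integral (XE \<epsilon> \<tau> - X \<tau>)) {\<tau>-\<epsilon>..\<tau>}"
    if eps: "\<epsilon> \<in> {0<..\<tau>}" for \<epsilon>
  proof -
    define D where "D = (\<lambda>s. XE \<epsilon> s - X s)"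
    define F where "F = (\<lambda>s. f (XE \<epsilon> s, pert w v \<tau> \<epsilon> s) - f (X s, w s))"
    have Dc: "continuous_on {0..1} D" unfolding D_def using XE_cont[OF eps] X_cont by (intro continuous_intros)
    have D0: "D 0 = 0" unfolding D_def using XE0[OF eps] by simp
    have DF0: "(F has_integral (D t - D 0)) {0..t}" if t: "t \<in> {0..1}" for t
      using has_integral_diff[OF XE_int[OF eps t] X_int[OF t]] unfolding F_def D_def
      by (simp add: algebra_simps XE0[OF eps])
    have te: "0 \<le> \<tau> - \<epsilon>" "\<tau> - \<epsilon> \<le> 1" using eps tau by auto
    have "norm (D (\<tau> - \<epsilon>)) \<le> (norm (D 0) + 0 * (\<tau> - \<epsilon> - 0)) * exp (K1 * (\<tau> - \<epsilon> - 0))"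
    proof (rule lip_gronwall[OF te(1) _ order_refl, where F = F])
      show "0 \<le> K1" using K1 by simp
      show "continuous_on {0..\<tau> - \<epsilon>} D" using te by (intro continuous_on_subset[OF Dc]) auto
      show "\<tau> - \<epsilon> \<in> {0..\<tau> - \<epsilon>}" using te by simp
      fix t assume t: "t \<in> {0..\<tau> - \<epsilon>}"
      show "(F has_integral (D t - D 0)) {0..t}" using DF0 t te by auto
      have "pert w v \<tau> \<epsilon> t = w t" unfolding pert_def using t by auto
      then show "norm (F t) \<le> K1 * norm (D t) + 0"
        unfolding F_def D_def using f_lip[OF w_bd w_bd, of t t] t te by auto
    qed
    then have Dte: "D (\<tau> - \<epsilon>) = 0" using D0 by simp
    have DF1: "(F has_integral (D t - D (\<tau> - \<epsilon>))) {\<tau> - \<epsilon>..t}" if t: "t \<in> {\<tau> - \<epsilon>..\<tau>}" for t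
      by (rule integral_shift[OF DF0]) (use t te tau in auto)
    have bnd: "norm (D s) \<le> M * \<epsilon>" if s: "s \<in> {\<tau> - \<epsilon>..\<tau>}" for s
    proof -
      have "norm (D s) \<le> (norm (D (\<tau> - \<epsilon>)) + (2 * \<rho> * K1) * (\<tau> - (\<tau> - \<epsilon>))) * exp (K1 * (s - (\<tau> - \<epsilon>)))"
      proof (rule lip_gronwall[where F = F])
        show "\<tau> - \<epsilon> \<le> \<tau>" "0 \<le> K1" "0 \<le> 2 * \<rho> * K1" using eps K1 rho by auto
        show "continuous_on {\<tau> - \<epsilon>..\<tau>} D" using te tau by (intro continuous_on_subset[OF Dc]) auto
        show "s \<in> {\<tau> - \<epsilon>..\<tau>}" by (rule s)
        fix t assume t: "t \<in> {\<tau> - \<epsilon>..\<tau>}"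
        show "(F has_integral (D t - D (\<tau> - \<epsilon>))) {\<tau> - \<epsilon>..t}" by (rule DF1[OF t])
        have t01: "t \<in> {0..1}" using t te tau by auto
        have "norm (F t) \<le> K1 * (norm (D t) + norm (pert w v \<tau> \<epsilon> t - w t))"
          unfolding F_def D_def by (rule f_lip[OF pert_bd[OF t01] w_bd[OF t01]])
        also have "norm (pert w v \<tau> \<epsilon> t - w t) \<le> 2 * \<rho>"
          using norm_triangle_ineq4[of "pert w v \<tau> \<epsilon> t" "w t"] pert_bd[OF t01, of \<epsilon>] w_bd[OF t01] by simp
        finally show "norm (F t) \<le> K1 * norm (D t) + 2 * \<rho> * K1" using K1 by (simp add: algebra_simps)
      qed
      also have "\<dots> = 2 * \<rho> * K1 * \<epsilon> * exp (K1 * (s - (\<tau> - \<epsilon>)))" using Dte by simp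
      also have "\<dots> \<le> 2 * \<rho> * K1 * \<epsilon> * exp K1"
      proof (intro mult_left_mono)
        have "K1 * (s - (\<tau> - \<epsilon>)) \<le> K1 * 1" using s eps tau K1 by (intro mult_left_mono) auto
        then show "exp (K1 * (s - (\<tau> - \<epsilon>))) \<le> exp K1" by simp
      qed (use rho K1 eps in auto)
      finally show ?thesis unfolding M_def by (simp add: algebra_simps)
    qed
    have "(F has_integral (D \<tau>)) {\<tau> - \<epsilon>..\<tau>}" using DF1[of \<tau>] Dte eps by simp
    then have "((\<lambda>s. f (XE \<epsilon> s, v) - f (X s, w s)) has_integral (D \<tau>)) {\<tau> - \<epsilon>..\<tau>}"
    proof (subst has_integral_spike_finite_eq[where S = "{\<tau> - \<epsilon>}"])
      show "finite {\<tau> - \<epsilon>}" by simp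
      fix x assume "x \<in> {\<tau> - \<epsilon>..\<tau>} - {\<tau> - \<epsilon>}"
      then show "F x = f (XE \<epsilon> x, v) - f (X x, w x)" unfolding F_def pert_def by auto
    qed
    then show ?thesis using bnd unfolding D_def by auto
  qed
  show ?thesis
  proof (rule tendstoI)
    fix e :: real assume e: "e > 0"
    have "eventually (\<lambda>s. dist (w s) (w \<tau>) < e / (4 * K1)) (at_left \<tau>)"
      using w_left by (rule tendstoD) (use e K1 in simp)
    then obtain b1 where b1: "b1 < \<tau>" "\<And>s. b1 < s \<Longrightarrow> s < \<tau> \<Longrightarrow> dist (w s) (w \<tau>) < e / (4 * K1)"
      unfolding eventually_at_left_field by blast
    obtain d2 where d2: "d2 > 0" "\<And>s. s \<in> {0..1} \<Longrightarrow> dist s \<tau> < d2 \<Longrightarrow> dist (X s) (X \<tau>) < e / (8 * K1)"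
      using X_cont tau e K1 unfolding continuous_on_iff
      by (metis atLeastAtMost_iff divide_pos_pos less_eq_real_def mult_pos_pos zero_less_numeral)
    define E0 where "E0 = min \<tau> (min (\<tau> - b1) (min d2 (e / (4 * K1 * M))))"
    have E0: "E0 > 0" unfolding E0_def using tau b1 d2 e K1 M by auto
    have ev: "eventually (\<lambda>\<epsilon>. 0 < \<epsilon> \<and> \<epsilon> < E0) (at_right 0)"
      unfolding eventually_at_right_field using E0 by (intro exI[of _ E0]) auto
    show "eventually (\<lambda>\<epsilon>. dist ((XE \<epsilon> \<tau> - X \<tau>) /\<^sub>R \<epsilon>) (f (X \<tau>, v) - f (X \<tau>, w \<tau>)) < e) (at_right 0)"
      using ev
    proof eventually_elim
      case (elim \<epsilon>)
      then have eps: "\<epsilon> \<in> {0<..\<tau>}" "\<epsilon> < \<tau> - b1" "\<epsilon> < d2" "\<epsilon> < e / (4 * K1 * M)"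
        unfolding E0_def by auto
      note k = key[OF eps(1)]
      have K1M: "K1 * (M * \<epsilon>) < e / 4"
      proof -
        have "K1 * M * \<epsilon> < K1 * M * (e / (4 * K1 * M))" using eps(4) K1 M by (intro mult_strict_left_mono) auto
        also have "\<dots> = e / 4" using K1 M by simp
        finally show ?thesis by (simp add: mult.assoc)
      qed
      have pb: "norm ((f (XE \<epsilon> s, v) - f (X s, w s)) - F0) \<le> 3 * e / 4" if s: "s \<in> cbox (\<tau> - \<epsilon>) \<tau>" for s
      proof -
        have s': "s \<in> {\<tau> - \<epsilon>..\<tau>}" using s by simp
        have s01: "s \<in> {0..1}" using s' eps tau by auto
        have nD: "norm (XE \<epsilon> s - X s) \<le> M * \<epsilon>" using k s' by blast
        have nX: "norm (X s - X \<tau>) < e / (8 * K1)"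
          using d2(2)[OF s01] s' eps by (simp add: dist_norm)
        have nw: "norm (w s - w \<tau>) < e / (4 * K1)"
        proof (cases "s = \<tau>")
          case True then show ?thesis using e K1 by simp
        next
          case False then show ?thesis using b1(2)[of s] s' eps by (simp add: dist_norm)
        qed
        have "norm ((f (XE \<epsilon> s, v) - f (X s, w s)) - F0)
            = norm ((f (XE \<epsilon> s, v) - f (X \<tau>, v)) - (f (X s, w s) - f (X \<tau>, w \<tau>)))"
          unfolding F0_def by (simp add: algebra_simps)
        also have "\<dots> \<le> norm (f (XE \<epsilon> s, v) - f (X \<tau>, v)) + norm (f (X s, w s) - f (X \<tau>, w \<tau>))"
          by (rule norm_triangle_ineq4)
        also have "\<dots> \<le> K1 * (norm (XE \<epsilon> s - X \<tau>) + norm (v - v)) + K1 * (norm (X s - X \<tau>) + norm (w s - w \<tau>))"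
          using tau by (intro add_mono f_lip v w_bd s01) auto
        also have "\<dots> \<le> K1 * (M * \<epsilon> + norm (X s - X \<tau>)) + K1 * (norm (X s - X \<tau>) + norm (w s - w \<tau>))"
        proof -
          have "norm (XE \<epsilon> s - X \<tau>) \<le> norm (XE \<epsilon> s - X s) + norm (X s - X \<tau>)"
            using norm_triangle_ineq[of "XE \<epsilon> s - X s" "X s - X \<tau>"] by simp
          then have "norm (XE \<epsilon> s - X \<tau>) + norm (v - v) \<le> M * \<epsilon> + norm (X s - X \<tau>)" using nD by simp
          then have "K1 * (norm (XE \<epsilon> s - X \<tau>) + norm (v - v)) \<le> K1 * (M * \<epsilon> + norm (X s - X \<tau>))"
            using K1 by (intro mult_left_mono) auto
          then show ?thesis by simp
        qed
        also have "\<dots> = K1 * (M * \<epsilon>) + 2 * (K1 * norm (X s - X \<tau>)) + K1 * norm (w s - w \<tau>)"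
          by (simp add: algebra_simps)
        also have "\<dots> \<le> e / 4 + 2 * (e / 8) + e / 4"
        proof (intro add_mono mult_left_mono)
          have "K1 * norm (X s - X \<tau>) \<le> K1 * (e / (8 * K1))" using nX K1 by (intro mult_left_mono) auto
          then show "K1 * norm (X s - X \<tau>) \<le> e / 8" using K1 by simp
          have "K1 * norm (w s - w \<tau>) \<le> K1 * (e / (4 * K1))" using nw K1 by (intro mult_left_mono) auto
          then show "K1 * norm (w s - w \<tau>) \<le> e / 4" using K1 by simp
        qed (use K1M in auto)
        finally show ?thesis by simp
      qed
      have hi: "((\<lambda>s. (f (XE \<epsilon> s, v) - f (X s, w s)) - F0) has_integral (XE \<epsilon> \<tau> - X \<tau> - \<epsilon> *\<^sub>R F0)) (cbox (\<tau> - \<epsilon>) \<tau>)"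
        using has_integral_diff[OF conjunct2[OF k] has_integral_const_real[of F0 "\<tau> - \<epsilon>" \<tau>]] eps by simp
      have "norm (XE \<epsilon> \<tau> - X \<tau> - \<epsilon> *\<^sub>R F0) \<le> 3 * e / 4 * Henstock_Kurzweil_Integration.content (cbox (\<tau> - \<epsilon>) \<tau>)"
        by (rule has_integral_bound[OF _ hi pb]) (use e in simp)
      also have "\<dots> = 3 * e / 4 * \<epsilon>" using eps by simp
      finally have n: "norm (XE \<epsilon> \<tau> - X \<tau> - \<epsilon> *\<^sub>R F0) \<le> 3 * e / 4 * \<epsilon>" .
      have "(XE \<epsilon> \<tau> - X \<tau>) /\<^sub>R \<epsilon> - F0 = (XE \<epsilon> \<tau> - X \<tau> - \<epsilon> *\<^sub>R F0) /\<^sub>R \<epsilon>"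
        using eps by (simp add: algebra_simps)
      then have "dist ((XE \<epsilon> \<tau> - X \<tau>) /\<^sub>R \<epsilon>) F0 = norm (XE \<epsilon> \<tau> - X \<tau> - \<epsilon> *\<^sub>R F0) / \<epsilon>"
        using eps by (simp add: dist_norm) (rule divide_inverse_commute[symmetric])
      also have "\<dots> \<le> 3 * e / 4" using n eps by (simp add: divide_le_eq)
      also have "\<dots> < e" using e by simp
      finally show ?case unfolding F0_def .
    qed
  qed
qed




theorem proposition8:
  fixes f :: "'x::euclidean_space \<times> 'u::euclidean_space \<Rightarrow> 'x"
    and f' :: "'x \<times> 'u \<Rightarrow> (('x \<times> 'u) \<Rightarrow>\<^sub>L 'x)"
    and g :: "'x \<Rightarrow> 'y::euclidean_space \<Rightarrow> 'x"
    and gx :: "'x \<Rightarrow> 'y \<Rightarrow> ('x \<Rightarrow>\<^sub>L 'x)"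
    and T L1 L2 :: nat
    and \<rho> K1 K2 K3 K4 K5 \<tau> :: real
    and x0 :: 'x and y :: "nat \<Rightarrow> 'y" and v :: 'u and u :: "real \<Rightarrow> 'u"
    and xs :: "nat \<Rightarrow> real \<Rightarrow> 'x"
    and xe :: "real \<Rightarrow> nat \<Rightarrow> real \<Rightarrow> 'x"
    and Psi :: "nat \<Rightarrow> real \<Rightarrow> 'x"
  assumes T_pos: "T \<ge> 1"
    and rho_pos: "\<rho> > 0"
    and f_deriv: "\<And>p. (f has_derivative blinfun_apply (f' p)) (at p)"
    and f'_cont: "continuous_on UNIV f'"
    and K1: "K1 \<ge> 1"
    and f_lip: "\<And>x1 x2 u1 u2. norm u1 \<le> \<rho> \<Longrightarrow> norm u2 \<le> \<rho> \<Longrightarrow>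
                  norm (f (x1, u1) - f (x2, u2)) \<le> K1 * (norm (x1 - x2) + norm (u1 - u2))"
    and g_cont: "continuous_on UNIV (\<lambda>(x, y). g x y)"
    and g_deriv: "\<And>x y. ((\<lambda>z. g z y) has_derivative blinfun_apply (gx x y)) (at x)"
    and K_nonneg: "K2 \<ge> 0" "K3 \<ge> 0" "K4 \<ge> 0" "K5 \<ge> 0"
    and L_pos: "L1 \<ge> 1" "L2 \<ge> 1"
    and g_bound: "\<And>x y. norm (g x y) \<le> K2 + K3 * norm x ^ L1 + K4 * norm y ^ L2
                                   + K5 * norm x ^ L1 * norm y ^ L2"
    and gx_bound: "\<And>x y. norm (gx x y) \<le> K2 + K3 * norm x ^ L1 + K4 * norm y ^ L2
                                   + K5 * norm x ^ L1 * norm y ^ L2"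
    and tau: "0 < \<tau>" "\<tau> < 1"
    and v: "norm v \<le> \<rho>"
    and u_adm: "admissible T \<rho> u"
    and u_left_cont: "(u \<longlongrightarrow> u \<tau>) (at_left \<tau>)"
    and xs_traj: "is_hybrid_traj f g T x0 y u xs"
    and xe_traj: "\<And>\<epsilon>. \<epsilon> \<in> {0..\<tau>} \<Longrightarrow> is_hybrid_traj f g T x0 y (pert u v \<tau> \<epsilon>) (xe \<epsilon>)"
    and Psi1: "continuous_on {\<tau>..1} (Psi 1)"
      "Psi 1 \<tau> = f (xs 1 \<tau>, v) - f (xs 1 \<tau>, u \<tau>)"
      "\<And>t. t \<in> {\<tau>..1} \<Longrightarrow>
         ((\<lambda>s. partial_x (f' (xs 1 s, u s)) (Psi 1 s)) has_integral (Psi 1 t - Psi 1 \<tau>)) {\<tau>..t}"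
    and Psii: "\<And>i. i \<in> {2..T} \<Longrightarrow> continuous_on {real i - 1..real i} (Psi i)"
      "\<And>i. i \<in> {2..T} \<Longrightarrow>
         Psi i (real i - 1) = gx (xs (i - 1) (real i - 1)) (y (i - 1)) (Psi (i - 1) (real i - 1))"
      "\<And>i t. i \<in> {2..T} \<Longrightarrow> t \<in> {real i - 1..real i} \<Longrightarrow>
         ((\<lambda>s. partial_x (f' (xs i s, u s)) (Psi i s)) has_integral (Psi i t - Psi i (real i - 1)))
           {real i - 1..t}"
  shows "(\<forall>t\<in>{\<tau>..<1}.
            ((\<lambda>\<epsilon>. (hybrid_state g T y (xe \<epsilon>) t - hybrid_state g T y xs t) /\<^sub>R \<epsilon>)
               \<longlongrightarrow> Psi 1 t) (at_right 0)) \<and>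
         (\<forall>i\<in>{2..T}. \<forall>t\<in>{real i - 1..<real i}.
            ((\<lambda>\<epsilon>. (hybrid_state g T y (xe \<epsilon>) t - hybrid_state g T y xs t) /\<^sub>R \<epsilon>)
               \<longlongrightarrow> Psi i t) (at_right 0)) \<and>
         ((\<lambda>\<epsilon>. (hybrid_state g T y (xe \<epsilon>) (real T) - hybrid_state g T y xs (real T)) /\<^sub>R \<epsilon>)
               \<longlongrightarrow> gx (xs T (real T)) (y T) (Psi T (real T))) (at_right 0)"
  proof -
  have K1p: "K1 > 0" using K1 by simp
  have u_bd: "\<And>s. s \<in> {0..real T} \<Longrightarrow> norm (u s) \<le> \<rho>"
    using u_adm unfolding admissible_def by blast
  have xs1: "xs 1 0 = x0"
    and xsg: "\<And>i. i \<in> {2..T} \<Longrightarrow> xs i (real i - 1) = g (xs (i - 1) (real i - 1)) (y (i - 1))"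
    and xsc: "\<And>i. i \<in> {1..T} \<Longrightarrow> continuous_on {real i - 1..real i} (xs i)"
    and xsi: "\<And>i t. i \<in> {1..T} \<Longrightarrow> t \<in> {real i - 1..real i} \<Longrightarrow>
          ((\<lambda>s. f (xs i s, u s)) has_integral (xs i t - xs i (real i - 1))) {real i - 1..t}"
    using xs_traj unfolding is_hybrid_traj_def by auto
  have xe1: "\<And>\<epsilon>. \<epsilon> \<in> {0..\<tau>} \<Longrightarrow> xe \<epsilon> 1 0 = x0"
    and xeg: "\<And>\<epsilon> i. \<epsilon> \<in> {0..\<tau>} \<Longrightarrow> i \<in> {2..T} \<Longrightarrow>
          xe \<epsilon> i (real i - 1) = g (xe \<epsilon> (i - 1) (real i - 1)) (y (i - 1))"
    and xec: "\<And>\<epsilon> i. \<epsilon> \<in> {0..\<tau>} \<Longrightarrow> i \<in> {1..T} \<Longrightarrow> continuous_on {real i - 1..real i} (xe \<epsilon> i)"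
    and xei: "\<And>\<epsilon> i t. \<epsilon> \<in> {0..\<tau>} \<Longrightarrow> i \<in> {1..T} \<Longrightarrow> t \<in> {real i - 1..real i} \<Longrightarrow>
          ((\<lambda>s. f (xe \<epsilon> i s, pert u v \<tau> \<epsilon> s)) has_integral (xe \<epsilon> i t - xe \<epsilon> i (real i - 1))) {real i - 1..t}"
    using xe_traj unfolding is_hybrid_traj_def by auto
  have one: "1 \<in> {1..T}" using T_pos by simp
  have pert_eq: "pert u v \<tau> \<epsilon> s = u s" if "s > \<tau>" for \<epsilon> s
    using that unfolding pert_def by auto
  have N: "((\<lambda>\<epsilon>. (xe \<epsilon> 1 \<tau> - xs 1 \<tau>) /\<^sub>R \<epsilon>) \<longlongrightarrow> Psi 1 \<tau>) (at_right 0)"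
    unfolding Psi1(2)
  proof (rule needle_lemma[OF K1p rho_pos f_lip tau _ v u_left_cont])
    show "norm (u s) \<le> \<rho>" if "s \<in> {0..1}" for s using u_bd that T_pos by auto
    show "continuous_on {0..1} (xs 1)" using xsc[OF one] by simp
    show "((\<lambda>s. f (xs 1 s, u s)) has_integral (xs 1 t - xs 1 0)) {0..t}" if "t \<in> {0..1}" for t
      using xsi[OF one, of t] that by simp
    show "continuous_on {0..1} (xe \<epsilon> 1)" if "\<epsilon> \<in> {0<..\<tau>}" for \<epsilon>
      using xec[OF _ one, of \<epsilon>] that by simp
    show "((\<lambda>s. f (xe \<epsilon> 1 s, pert u v \<tau> \<epsilon> s)) has_integral (xe \<epsilon> 1 t - xe \<epsilon> 1 0)) {0..t}"
      if "\<epsilon> \<in> {0<..\<tau>}" "t \<in> {0..1}" for \<epsilon> t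
      using xei[OF _ one, of \<epsilon> t] that by simp
    show "xe \<epsilon> 1 0 = xs 1 0" if "\<epsilon> \<in> {0<..\<tau>}" for \<epsilon> using xe1[of \<epsilon>] xs1 that by simp
  qed (use u_bd in auto)
  have M1: "((\<lambda>\<epsilon>. (xe \<epsilon> 1 t - xs 1 t) /\<^sub>R \<epsilon>) \<longlongrightarrow> Psi 1 t) (at_right 0)" if t: "t \<in> {\<tau>..1}" for t
  proof (rule mode_lemma[where XE = "\<lambda>\<epsilon>. xe \<epsilon> 1" and X = "xs 1" and P = "Psi 1" and w = u and a = \<tau> and b = 1
        and ee = \<tau>, OF f_deriv f'_cont _ f_lip])
    show "((\<lambda>\<epsilon>. (xe \<epsilon> 1 \<tau> - xs 1 \<tau>) /\<^sub>R \<epsilon>) \<longlongrightarrow> Psi 1 \<tau>) (at_right 0)" by (rule N)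
    show "t \<in> {\<tau>..1}" by (rule t)
    show "continuous_on {\<tau>..1} (Psi 1)" by (rule Psi1(1))
    show "0 \<le> K1" "\<tau> \<le> 1" "0 < \<tau>" using K1 tau by auto
    show "norm (u s) \<le> \<rho>" if "s \<in> {\<tau>..1}" for s using u_bd that T_pos tau by auto
    have c1: "continuous_on {0..1} (xs 1)" using xsc[OF one] by simp
    show "continuous_on {\<tau>..1} (xs 1)" by (rule continuous_on_subset[OF c1]) (use tau in auto)
    show "((\<lambda>s. f (xs 1 s, u s)) has_integral (xs 1 t' - xs 1 \<tau>)) {\<tau>..t'}" if "t' \<in> {\<tau>..1}" for t'
      by (rule integral_shift[of 0 1]) (use xsi[OF one] that tau in auto)
    show "continuous_on {\<tau>..1} (xe \<epsilon> 1)" if "\<epsilon> \<in> {0<..<\<tau>}" for \<epsilon>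
    proof -
      have c1: "continuous_on {0..1} (xe \<epsilon> 1)" using xec[OF _ one, of \<epsilon>] that by simp
      show ?thesis by (rule continuous_on_subset[OF c1]) (use tau in auto)
    qed
    show "((\<lambda>s. f (xe \<epsilon> 1 s, u s)) has_integral (xe \<epsilon> 1 t' - xe \<epsilon> 1 \<tau>)) {\<tau>..t'}"
      if e: "\<epsilon> \<in> {0<..<\<tau>}" and t': "t' \<in> {\<tau>..1}" for \<epsilon> t'
    proof -
      have "((\<lambda>s. f (xe \<epsilon> 1 s, pert u v \<tau> \<epsilon> s)) has_integral (xe \<epsilon> 1 t' - xe \<epsilon> 1 \<tau>)) {\<tau>..t'}"
        by (rule integral_shift[of 0 1]) (use xei[OF _ one, of \<epsilon>] e t' tau in auto)
      then show ?thesis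
      proof (subst has_integral_spike_finite_eq[where S = "{\<tau>}"])
        fix x assume "x \<in> {\<tau>..t'} - {\<tau>}"
        then show "f (xe \<epsilon> 1 x, pert u v \<tau> \<epsilon> x) = f (xe \<epsilon> 1 x, u x)" using pert_eq[of x \<epsilon>] by auto
      qed auto
    qed
    show "((\<lambda>s. partial_x (f' (xs 1 s, u s)) (Psi 1 s)) has_integral (Psi 1 t' - Psi 1 \<tau>)) {\<tau>..t'}"
      if "t' \<in> {\<tau>..1}" for t' by (rule Psi1(3)[OF that])
  qed
  have Mi: "\<forall>t\<in>{real i - 1..real i}. ((\<lambda>\<epsilon>. (xe \<epsilon> i t - xs i t) /\<^sub>R \<epsilon>) \<longlongrightarrow> Psi i t) (at_right 0)"
    if "2 \<le> i" "i \<le> T" for i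
    using that
  proof (induction i)
    case 0 then show ?case by simp
  next
    case (Suc n)
    define i where "i = Suc n"
    have i: "i \<in> {2..T}" using Suc.prems unfolding i_def by auto
    have ri: "real i - 1 = real n" unfolding i_def by simp
    have prev: "((\<lambda>\<epsilon>. (xe \<epsilon> n (real n) - xs n (real n)) /\<^sub>R \<epsilon>) \<longlongrightarrow> Psi n (real n)) (at_right 0)"
    proof (cases "n = 1")
      case True then show ?thesis using M1[of 1] tau by simp
    next
      case False then have "2 \<le> n" "n \<le> T" using Suc.prems by auto
      then show ?thesis using Suc.IH by auto
    qed
    have ch: "((\<lambda>\<epsilon>. (g (xe \<epsilon> n (real n)) (y n) - g (xs n (real n)) (y n)) /\<^sub>R \<epsilon>)
        \<longlongrightarrow> gx (xs n (real n)) (y n) (Psi n (real n))) (at_right 0)"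
      by (rule diff_quot_chain[OF g_deriv prev])
    have init: "((\<lambda>\<epsilon>. (xe \<epsilon> i (real i - 1) - xs i (real i - 1)) /\<^sub>R \<epsilon>) \<longlongrightarrow> Psi i (real i - 1)) (at_right 0)"
    proof -
      have Peq: "Psi i (real i - 1) = gx (xs n (real n)) (y n) (Psi n (real n))"
        using Psii(2)[OF i] ri unfolding i_def by simp
      have ev: "eventually (\<lambda>\<epsilon>. (g (xe \<epsilon> n (real n)) (y n) - g (xs n (real n)) (y n)) /\<^sub>R \<epsilon>
          = (xe \<epsilon> i (real i - 1) - xs i (real i - 1)) /\<^sub>R \<epsilon>) (at_right 0)"
        unfolding eventually_at_right_field using tau
      proof (intro exI[of _ \<tau>] conjI allI impI)
        fix \<epsilon> :: real assume "0 < \<epsilon>" "\<epsilon> < \<tau>"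
        then show "(g (xe \<epsilon> n (real n)) (y n) - g (xs n (real n)) (y n)) /\<^sub>R \<epsilon>
          = (xe \<epsilon> i (real i - 1) - xs i (real i - 1)) /\<^sub>R \<epsilon>"
          using xeg[of \<epsilon> i] xsg[of i] i ri unfolding i_def by simp
      qed auto
      show ?thesis using ch unfolding Peq tendsto_cong[OF ev] .
    qed
    have i1: "i \<in> {1..T}" using i by simp
    have "\<forall>t\<in>{real i - 1..real i}. ((\<lambda>\<epsilon>. (xe \<epsilon> i t - xs i t) /\<^sub>R \<epsilon>) \<longlongrightarrow> Psi i t) (at_right 0)"
    proof
      fix t assume t: "t \<in> {real i - 1..real i}"
      have ge1: "s \<in> {real i - 1..real i} \<Longrightarrow> s > \<tau>" for s using i tau by auto
      show "((\<lambda>\<epsilon>. (xe \<epsilon> i t - xs i t) /\<^sub>R \<epsilon>) \<longlongrightarrow> Psi i t) (at_right 0)"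
      proof (rule mode_lemma[where XE = "\<lambda>\<epsilon>. xe \<epsilon> i" and X = "xs i" and P = "Psi i" and w = u and a = "real i - 1" and b = "real i"
        and ee = \<tau>, OF f_deriv f'_cont _ f_lip])
        show "((\<lambda>\<epsilon>. (xe \<epsilon> i (real i - 1) - xs i (real i - 1)) /\<^sub>R \<epsilon>) \<longlongrightarrow> Psi i (real i - 1)) (at_right 0)" by (rule init)
        show "t \<in> {real i - 1..real i}" by (rule t)
        show "continuous_on {real i - 1..real i} (Psi i)" by (rule Psii(1)[OF i])
        show "continuous_on {real i - 1..real i} (xs i)" by (rule xsc[OF i1])
        show "((\<lambda>s. f (xs i s, u s)) has_integral (xs i t' - xs i (real i - 1))) {real i - 1..t'}"
          if "t' \<in> {real i - 1..real i}" for t' by (rule xsi[OF i1 that])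
        show "((\<lambda>s. partial_x (f' (xs i s, u s)) (Psi i s)) has_integral (Psi i t' - Psi i (real i - 1))) {real i - 1..t'}"
          if "t' \<in> {real i - 1..real i}" for t' by (rule Psii(3)[OF i that])
        show "0 \<le> K1" "real i - 1 \<le> real i" "0 < \<tau>" using K1 tau by auto
        show "norm (u s) \<le> \<rho>" if "s \<in> {real i - 1..real i}" for s using u_bd that i by auto
        show "continuous_on {real i - 1..real i} (xe \<epsilon> i)" if "\<epsilon> \<in> {0<..<\<tau>}" for \<epsilon>
          using xec[OF _ i1, of \<epsilon>] that by auto
        show "((\<lambda>s. f (xe \<epsilon> i s, u s)) has_integral (xe \<epsilon> i t' - xe \<epsilon> i (real i - 1))) {real i - 1..t'}"
          if e: "\<epsilon> \<in> {0<..<\<tau>}" and t': "t' \<in> {real i - 1..real i}" for \<epsilon> t'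
        proof -
          have "((\<lambda>s. f (xe \<epsilon> i s, pert u v \<tau> \<epsilon> s)) has_integral (xe \<epsilon> i t' - xe \<epsilon> i (real i - 1))) {real i - 1..t'}"
            using xei[OF _ i1 t', of \<epsilon>] e by auto
          then show ?thesis
          proof (rule has_integral_eq[rotated])
            fix x assume "x \<in> {real i - 1..t'}"
            then have "x > \<tau>" using ge1[of x] t' by auto
            then show "f (xe \<epsilon> i x, pert u v \<tau> \<epsilon> x) = f (xe \<epsilon> i x, u x)" using pert_eq by simp
          qed
        qed
      qed
    qed
    then show ?case unfolding i_def .
  qed
  have hs_eq: "hybrid_state g T y Z t = Z i t"
    if "i \<in> {1..T}" "t \<in> {real i - 1..<real i}" for Z :: "nat \<Rightarrow> real \<Rightarrow> 'x" and i t
  proof -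
    have tT: "t \<noteq> real T" using that by auto
    have "\<lfloor>t\<rfloor> = int i - 1" using that by (simp add: floor_eq_iff)
    then have "nat \<lfloor>t\<rfloor> + 1 = i" using that by auto
    then show ?thesis unfolding hybrid_state_def using tT by simp
  qed
  have hsT: "hybrid_state g T y Z (real T) = g (Z T (real T)) (y T)" for Z :: "nat \<Rightarrow> real \<Rightarrow> 'x"
    unfolding hybrid_state_def by simp
  have lastT: "((\<lambda>\<epsilon>. (xe \<epsilon> T (real T) - xs T (real T)) /\<^sub>R \<epsilon>) \<longlongrightarrow> Psi T (real T)) (at_right 0)"
  proof (cases "T = 1")
    case True then show ?thesis using M1[of 1] tau by simp
  next
    case False then show ?thesis using Mi[of T] T_pos by auto
  qed
  show ?thesis
  proof (intro conjI ballI)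
    fix t assume t: "t \<in> {\<tau>..<1}"
    have t1: "t \<in> {real 1 - 1..<real 1}" using t tau by simp
    show "((\<lambda>\<epsilon>. (hybrid_state g T y (xe \<epsilon>) t - hybrid_state g T y xs t) /\<^sub>R \<epsilon>) \<longlongrightarrow> Psi 1 t) (at_right 0)"
      unfolding hs_eq[OF one t1] using M1[of t] t by simp
  next
    fix i t assume i: "i \<in> {2..T}" and t: "t \<in> {real i - 1..<real i}"
    have i1: "i \<in> {1..T}" using i by simp
    show "((\<lambda>\<epsilon>. (hybrid_state g T y (xe \<epsilon>) t - hybrid_state g T y xs t) /\<^sub>R \<epsilon>) \<longlongrightarrow> Psi i t) (at_right 0)"
      unfolding hs_eq[OF i1 t] using Mi[of i] i t by simp
  next
    show "((\<lambda>\<epsilon>. (hybrid_state g T y (xe \<epsilon>) (real T) - hybrid_state g T y xs (real T)) /\<^sub>R \<epsilon>)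
               \<longlongrightarrow> gx (xs T (real T)) (y T) (Psi T (real T))) (at_right 0)"
      unfolding hsT by (rule diff_quot_chain[OF g_deriv lastT])
  qed
qed

end
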